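(* Let $n\ge1$, $K=U(n)$, $\underline{\lambda}=(\lambda_1\ge\dots\ge\lambda_{n+1})$, $\underline{\mu}=(\mu_1\ge\dots\ge\mu_n)$ with $\lambda_1\ge\mu_1\ge\lambda_2\ge\dots\ge\mu_n\ge\lambda_{n+1}$, and let $\tilde p$, $W_{(\underline{\lambda},\underline{\mu})}$, $\omega_{(\underline{\lambda},\underline{\mu})}$ and $\Psi$ be as in the context. Then for all $a,b\in T_{\tilde p}(K\cdot\tilde p)^\omega$, $$(\omega_\Lambda)_{\tilde p}(a,b)=\omega_{(\underline{\lambda},\underline{\mu})}(\Psi(a),\Psi(b));$$ that is, the symplectic form on $W_{(\underline{\lambda},\underline{\mu})}$ obtained by transporting the symplectic-slice form $\overline{\omega}_{\tilde p}$ through the isomorphism $\overline{\Psi}\colon W_{\tilde p}\to W_{(\underline{\lambda},\underline{\mu})}$ equals $\omega_{(\underline{\lambda},\underline{\mu})}$.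
   Context: Notation: for a finite real sequence $\underline{\tau}$, $[\underline{\tau}]$ is its set of distinct values, $\underline{\tau}_i$ the $i$-th largest element of $[\underline{\tau}]$, $m(\underline{\tau})=|[\underline{\tau}]|$, $n_v(\underline{\tau})$ the multiplicity of $v$. Shapes: for each value $v$ in $\underline{\lambda}$ or $\underline{\mu}$, the component labelled $v$ is an M-shape if $n_v(\underline{\mu})=n_v(\underline{\lambda})+1$, a W-shape if $n_v(\underline{\lambda})=n_v(\underline{\mu})+1$, a parallelogram-shape if $n_v(\underline{\lambda})=n_v(\underline{\mu})$. For $\mu\in[\underline{\mu}]$ with M-shape component, $r_\mu>0$ with $r_\mu^2=-\prod_{\lambda\in[\underline{\lambda}],\,\text{W}}(\mu-\lambda)\prod_{\tau\in[\underline{\mu}],\,\text{M},\,\tau\ne\mu}\frac{1}{\mu-\tau}$; otherwise $r_\mu=0$. For $\mu$ whose component is not an M-shape, $C_\mu=\sum_{i=1}^{n+1}\lambda_i-\sum_{i=1}^n\mu_i-\mu+\sum_{\tau\in[\underline{\mu}],\,\text{M}}\frac{r_\tau^2}{\mu-\tau}$ (nonzero for parallelogram-shapes). Setting: $\mathcal{O}_\Lambda$ is the set of $(n+1)\times(n+1)$ Hermitian matrices with eigenvalues $\lambda_1,\dots,\lambda_{n+1}$, with symplectic form $(\omega_\Lambda)_p([X,p],[Y,p])=\frac{1}{\sqrt{-1}}\mathrm{Tr}(p[X,Y])$, $X,Y\in\mathfrak{u}(n+1)$; $K$ acts by conjugation by $\mathrm{diag}(1,k)$. $\mathrm{M}=\mathrm{diag}(\mu_1,\dots,\mu_n)$,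 $c=\sum\lambda_i-\sum\mu_i$; for $\mu\in[\underline{\mu}]$ and $\mathbf{v}\in\mathbb{C}^n$, $\mathbf{v}_\mu\in\mathbb{C}^{n_\mu(\underline{\mu})}$ is the block of coordinates $j$ with $\mu_j=\mu$. $\tilde p=\begin{pmatrix}c&\mathbf{z}^\dagger\\ \mathbf{z}&\mathrm{M}\end{pmatrix}\in\mathcal{O}_\Lambda$ with $\mathbf{z}_\mu=(r_\mu,0,\dots,0)^T$ for each $\mu\in[\underline{\mu}]$. Elements of $T_{\tilde p}(K\cdot\tilde p)^\omega$ (the $\omega_\Lambda$-orthogonal complement of the $K$-orbit's tangent space) are Hermitian matrices $\begin{pmatrix}0&\mathbf{v}^\dagger\\ \mathbf{v}&0\end{pmatrix}$. $W_{(\underline{\lambda},\underline{\mu})}=\bigoplus_{\mu\in[\underline{\mu}],\,\text{parallelogram-shape}}\mathbb{C}^{n_\mu(\underline{\mu})}$ with $\omega_{(\underline{\lambda},\underline{\mu})}(\mathbf{u},\mathbf{w})=\frac{1}{\sqrt{-1}}\sum_{\mu\ \text{parallelogram}}\frac{-\mathbf{u}_\mu^\dagger\mathbf{w}_\mu+\mathbf{w}_\mu^\dagger\mathbf{u}_\mu}{C_\mu}$. $\Psi\colon T_{\tilde p}(K\cdot\tilde p)^\omega\to W_{(\underline{\lambda},\underline{\mu})}$ sends the matrix with lower-left block $\mathbf{v}$ to $(\mathbf{v}_\mu)_{\mu\ \text{parallelogram-shape}}$; it is surjective with kernel $T_{\tilde p}(K\cdot\tilde p)\cap T_{\tilde p}(K\cdot\tilde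 p)^\omega$, hence descends to a linear isomorphism $\overline{\Psi}$ from the symplectic slice $W_{\tilde p}=T_{\tilde p}(K\cdot\tilde p)^\omega/(T_{\tilde p}(K\cdot\tilde p)\cap T_{\tilde p}(K\cdot\tilde p)^\omega)$, whose symplectic form $\overline{\omega}_{\tilde p}$ is induced by $\omega_\Lambda$. *)

theory Defs
  imports Complex_Main "Jordan_Normal_Form.Schur_Decomposition"
begin

text \<open>lam is indexed by 1..n+1, mu by 1..n (as in the paper).\<close>

definition interlacing :: "nat \<Rightarrow> (nat \<Rightarrow> real) \<Rightarrow> (nat \<Rightarrow> real) \<Rightarrow> bool" where
  "interlacing n lam mu \<longleftrightarrow> (\<forall>i\<in>{1..n}. lam i \<ge> mu i \<and> mu i \<ge> lam (Suc i))"

definition lam_vals :: "nat \<Rightarrow> (nat \<Rightarrow> real) \<Rightarrow> real set" where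
  "lam_vals n lam = lam ` {1..n+1}"

definition mu_vals :: "nat \<Rightarrow> (nat \<Rightarrow> real) \<Rightarrow> real set" where
  "mu_vals n mu = mu ` {1..n}"

definition mult_lam :: "nat \<Rightarrow> (nat \<Rightarrow> real) \<Rightarrow> real \<Rightarrow> nat" where
  "mult_lam n lam v = card {i\<in>{1..n+1}. lam i = v}"

definition mult_mu :: "nat \<Rightarrow> (nat \<Rightarrow> real) \<Rightarrow> real \<Rightarrow> nat" where
  "mult_mu n mu v = card {i\<in>{1..n}. mu i = v}"

definition is_M :: "nat \<Rightarrow> (nat \<Rightarrow> real) \<Rightarrow> (nat \<Rightarrow> real) \<Rightarrow> real \<Rightarrow> bool" where
  "is_M n lam mu v \<longleftrightarrow> mult_mu n mu v = mult_lam n lam v + 1"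

definition is_W :: "nat \<Rightarrow> (nat \<Rightarrow> real) \<Rightarrow> (nat \<Rightarrow> real) \<Rightarrow> real \<Rightarrow> bool" where
  "is_W n lam mu v \<longleftrightarrow> mult_lam n lam v = mult_mu n mu v + 1"

definition is_P :: "nat \<Rightarrow> (nat \<Rightarrow> real) \<Rightarrow> (nat \<Rightarrow> real) \<Rightarrow> real \<Rightarrow> bool" where
  "is_P n lam mu v \<longleftrightarrow> mult_lam n lam v = mult_mu n mu v"

definition r_coef :: "nat \<Rightarrow> (nat \<Rightarrow> real) \<Rightarrow> (nat \<Rightarrow> real) \<Rightarrow> real \<Rightarrow> real" where
  "r_coef n lam mu m =
     (if m \<in> mu_vals n mu \<and> is_M n lam mu m then
        sqrt (- (\<Prod>l\<in>{l\<in>lam_vals n lam. is_W n lam mu l}. (m - l))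
               * (\<Prod>t\<in>{t\<in>mu_vals n mu. is_M n lam mu t \<and> t \<noteq> m}. 1 / (m - t)))
      else 0)"

definition c_const :: "nat \<Rightarrow> (nat \<Rightarrow> real) \<Rightarrow> (nat \<Rightarrow> real) \<Rightarrow> real" where
  "c_const n lam mu = (\<Sum>i=1..n+1. lam i) - (\<Sum>i=1..n. mu i)"

definition C_coef :: "nat \<Rightarrow> (nat \<Rightarrow> real) \<Rightarrow> (nat \<Rightarrow> real) \<Rightarrow> real \<Rightarrow> real" where
  "C_coef n lam mu m = c_const n lam mu - m
     + (\<Sum>t\<in>{t\<in>mu_vals n mu. is_M n lam mu t}. (r_coef n lam mu t)\<^sup>2 / (m - t))"

definition first_idx :: "nat \<Rightarrow> (nat \<Rightarrow> real) \<Rightarrow> real \<Rightarrow> nat" where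
  "first_idx n mu v = (LEAST j. j \<in> {1..n} \<and> mu j = v)"

definition z_vec :: "nat \<Rightarrow> (nat \<Rightarrow> real) \<Rightarrow> (nat \<Rightarrow> real) \<Rightarrow> nat \<Rightarrow> complex" where
  "z_vec n lam mu j =
     (if j = first_idx n mu (mu j) then complex_of_real (r_coef n lam mu (mu j)) else 0)"

text \<open>Matrix indices 0..n; row/column 0 is the first one, row/column j (1..n) carries mu j.\<close>
definition p_tilde :: "nat \<Rightarrow> (nat \<Rightarrow> real) \<Rightarrow> (nat \<Rightarrow> real) \<Rightarrow> complex mat" where
  "p_tilde n lam mu = mat (n+1) (n+1) (\<lambda>(i,j).
     if i = 0 \<and> j = 0 then complex_of_real (c_const n lam mu)
     else if i = 0 then cnj (z_vec n lam mu j)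
     else if j = 0 then z_vec n lam mu i
     else if i = j then complex_of_real (mu i) else 0)"

definition mtrace :: "complex mat \<Rightarrow> complex" where
  "mtrace A = (\<Sum>i<dim_row A. A $$ (i,i))"

definition comm :: "complex mat \<Rightarrow> complex mat \<Rightarrow> complex mat" where
  "comm X Y = X * Y - Y * X"

definition u_alg :: "nat \<Rightarrow> complex mat set" where
  "u_alg N = {X. X \<in> carrier_mat N N \<and> mat_adjoint X = - X}"

definition tangent_orbit :: "complex mat \<Rightarrow> complex mat set" where
  "tangent_orbit p = {comm X p | X. X \<in> u_alg (dim_row p)}"

text \<open>(omega_Lambda)_p([X,p],[Y,p]) = (1/i) Tr(p[X,Y]) (X, Y any representatives).\<close>
definition omega_KKS :: "complex mat \<Rightarrow> complex mat \<Rightarrow> complex mat \<Rightarrow> complex" where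
  "omega_KKS p a b =
     (let X = (SOME X. X \<in> u_alg (dim_row p) \<and> comm X p = a);
          Y = (SOME Y. Y \<in> u_alg (dim_row p) \<and> comm Y p = b)
      in (1 / \<i>) * mtrace (p * comm X Y))"

definition k_alg :: "nat \<Rightarrow> complex mat set" where
  "k_alg n = {four_block_mat (0\<^sub>m 1 1) (0\<^sub>m 1 n) (0\<^sub>m n 1) k | k. k \<in> u_alg n}"

definition tangent_K_orbit :: "nat \<Rightarrow> complex mat \<Rightarrow> complex mat set" where
  "tangent_K_orbit n p = {comm \<xi> p | \<xi>. \<xi> \<in> k_alg n}"

definition tangent_K_perp :: "nat \<Rightarrow> complex mat \<Rightarrow> complex mat set" where
  "tangent_K_perp n p =
     {a \<in> tangent_orbit p. \<forall>t \<in> tangent_K_orbit n p. omega_KKS p a t = 0}"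

text \<open>An element of W is represented as a function from parallelogram values mu to
  vectors in C^{n_mu(mu)}; Psi a sends a to its lower-left block v, split into blocks.\<close>
definition Psi :: "nat \<Rightarrow> (nat \<Rightarrow> real) \<Rightarrow> (nat \<Rightarrow> real) \<Rightarrow> complex mat \<Rightarrow> real \<Rightarrow> complex vec" where
  "Psi n lam mu a = (\<lambda>m. if m \<in> mu_vals n mu \<and> is_P n lam mu m
      then vec (mult_mu n mu m) (\<lambda>k. a $$ (first_idx n mu m + k, 0))
      else vec 0 (\<lambda>_. 0))"

definition cdot :: "complex vec \<Rightarrow> complex vec \<Rightarrow> complex" where
  "cdot u w = (\<Sum>k<dim_vec u. cnj (u $ k) * w $ k)"

definition omega_W :: "nat \<Rightarrow> (nat \<Rightarrow> real) \<Rightarrow> (nat \<Rightarrow> real)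
    \<Rightarrow> (real \<Rightarrow> complex vec) \<Rightarrow> (real \<Rightarrow> complex vec) \<Rightarrow> complex" where
  "omega_W n lam mu u w = (1 / \<i>) *
     (\<Sum>m\<in>{m\<in>mu_vals n mu. is_P n lam mu m}.
        (- cdot (u m) (w m) + cdot (w m) (u m)) / complex_of_real (C_coef n lam mu m))"

end

theory Submission
  imports Defs
begin

section \<open>Divided differences\<close>

definition Dd :: "real set \<Rightarrow> (real \<Rightarrow> real) \<Rightarrow> real" where
  "Dd T f = (\<Sum>t\<in>T. f t / (\<Prod>s\<in>T - {t}. (t - s)))"

lemma Dd_diff: "Dd T (\<lambda>x. f x - g x) = Dd T f - Dd T g"
  unfolding Dd_def by (simp add: diff_divide_distrib sum_subtractf)

lemma Dd_add: "Dd T (\<lambda>x. f x + g x) = Dd T f + Dd T g"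
  unfolding Dd_def by (simp add: add_divide_distrib sum.distrib)

lemma Dd_scale: "Dd T (\<lambda>x. k * f x) = k * Dd T f"
  unfolding Dd_def by (simp add: sum_distrib_left)

lemma Dd_shift:
  assumes "finite T" "a \<in> T"
  shows "Dd T (\<lambda>x. (x - a) * f x) = Dd (T - {a}) f"
proof -
  have "Dd T (\<lambda>x. (x - a) * f x) = (\<Sum>t\<in>T - {a}. (t - a) * f t / (\<Prod>s\<in>T - {t}. (t - s)))"
    unfolding Dd_def using assms by (simp add: sum.remove)
  also have "\<dots> = (\<Sum>t\<in>T - {a}. f t / (\<Prod>s\<in>T - {a} - {t}. (t - s)))"
  proof (rule sum.cong)
    fix t assume t: "t \<in> T - {a}"
    have "T - {t} = insert a (T - {a} - {t})" using t assms by auto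
    hence "(\<Prod>s\<in>T - {t}. (t - s)) = (t - a) * (\<Prod>s\<in>T - {a} - {t}. (t - s))"
      using assms by (simp add: prod.insert_remove)
    moreover have "t - a \<noteq> 0" using t by auto
    ultimately show "(t - a) * f t / (\<Prod>s\<in>T - {t}. (t - s)) = f t / (\<Prod>s\<in>T - {a} - {t}. (t - s))"
      by simp
  qed simp
  finally show ?thesis unfolding Dd_def by simp
qed

lemma Dd_one:
  assumes "finite T"
  shows "Dd T (\<lambda>_. 1) = (if card T = 1 then 1 else 0)"
  using assms
proof (induction "card T" arbitrary: T rule: less_induct)
  case less
  show ?case
  proof (cases "card T \<le> 1")
    case True
    then consider "card T = 0" | "card T = 1" by linarith
    then show ?thesis
    proof cases
      case 1 then have "T = {}" using less.prems by auto
      then show ?thesis by (simp add: Dd_def)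
    next
      case 2 then obtain x where "T = {x}" using card_1_singletonE by blast
      then show ?thesis by (simp add: Dd_def)
    qed
  next
    case False
    then obtain a b where ab: "a \<in> T" "b \<in> T" "a \<noteq> b"
      by (metis One_nat_def card.empty card.infinite card_le_Suc0_iff_eq le_zero_eq nat_le_linear)
    have ca: "card (T - {a}) = card T - 1" "card (T - {b}) = card T - 1"
      using ab less.prems by auto
    have IHa: "Dd (T - {a}) (\<lambda>_. 1) = (if card T - 1 = 1 then 1 else 0)"
      using less.hyps[of "T - {a}"] ca less.prems False by auto
    have IHb: "Dd (T - {b}) (\<lambda>_. 1) = (if card T - 1 = 1 then 1 else 0)"
      using less.hyps[of "T - {b}"] ca less.prems False by auto
    have "(a - b) * Dd T (\<lambda>_. 1) = Dd T (\<lambda>x. (a - b) * 1)"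
      by (rule Dd_scale[symmetric])
    also have "\<dots> = Dd T (\<lambda>x. (x - b) * 1 - (x - a) * 1)"
      by (simp add: algebra_simps)
    also have "\<dots> = Dd T (\<lambda>x. (x - b) * 1) - Dd T (\<lambda>x. (x - a) * 1)"
      by (rule Dd_diff)
    also have "\<dots> = 0"
      using Dd_shift[OF less.prems ab(1), of "\<lambda>_. 1"] Dd_shift[OF less.prems ab(2), of "\<lambda>_. 1"]
        IHa IHb by simp
    finally show ?thesis using ab False by simp
  qed
qed

lemma Dd_prod:
  assumes "finite R" "finite T" "card R \<le> card T"
  shows "Dd T (\<lambda>x. \<Prod>l\<in>R. (x - l)) =
    (if card R = card T then sum id T - sum id R else if card R + 1 = card T then 1 else 0)"
  using assms
proof (induction R arbitrary: T rule: finite_induct)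
  case empty
  show ?case
  proof (cases "card T = 0")
    case True then have "T = {}" using empty by auto
    then show ?thesis by (simp add: Dd_def)
  next
    case False then show ?thesis using Dd_one[OF empty(1)] by simp
  qed
next
  case (insert l R0)
  have cR: "card (insert l R0) = card R0 + 1" using insert by simp
  then have "T \<noteq> {}" using insert.prems by auto
  then obtain a where a: "a \<in> T" by blast
  have cTa: "card (T - {a}) = card T - 1" using a insert.prems by simp
  have fin: "finite (T - {a})" using insert.prems by simp
  let ?g = "\<lambda>x. \<Prod>l\<in>R0. (x - l)"
  have "Dd T (\<lambda>x. \<Prod>l'\<in>insert l R0. (x - l')) = Dd T (\<lambda>x. (x - a) * ?g x + (a - l) * ?g x)"
    using insert by (simp add: algebra_simps)
  also have "\<dots> = Dd (T - {a}) ?g + (a - l) * Dd T ?g"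
    by (simp add: Dd_add Dd_scale Dd_shift[OF insert.prems(1) a])
  finally have eq: "Dd T (\<lambda>x. \<Prod>l'\<in>insert l R0. (x - l')) = Dd (T - {a}) ?g + (a - l) * Dd T ?g" .
  have IH1: "Dd (T - {a}) ?g = (if card R0 = card T - 1 then sum id (T - {a}) - sum id R0
      else if card R0 + 1 = card T - 1 then 1 else 0)"
    using insert.IH[OF fin] cTa insert.prems cR by simp
  have IH2: "Dd T ?g = (if card R0 = card T then sum id T - sum id R0
      else if card R0 + 1 = card T then 1 else 0)"
    using insert.IH[OF insert.prems(1)] insert.prems cR by simp
  have sT: "sum id (T - {a}) = sum id T - a" using a insert.prems by (simp add: sum_diff1)
  have sR: "sum id (insert l R0) = l + sum id R0" using insert by simp
  show ?case unfolding eq IH1 IH2 sT sR cR using insert.prems cR by auto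
qed



locale ilc =
  fixes n :: nat and lam mu :: "nat \<Rightarrow> real"
  assumes il: "interlacing n lam mu"
begin

lemma il1: "i \<in> {1..n} \<Longrightarrow> mu i \<le> lam i" and il2: "i \<in> {1..n} \<Longrightarrow> lam (Suc i) \<le> mu i"
  using il unfolding interlacing_def by auto

definition cL :: "(real \<Rightarrow> bool) \<Rightarrow> nat" where "cL P = card {i\<in>{1..n+1}. P (lam i)}"
definition cM :: "(real \<Rightarrow> bool) \<Rightarrow> nat" where "cM P = card {i\<in>{1..n}. P (mu i)}"

lemma K:
  assumes up: "\<And>y y'. P y \<Longrightarrow> y \<le> y' \<Longrightarrow> P y'"
  shows "cM P \<le> cL P" "cL P \<le> cM P + 1"
proof -
  have "{i\<in>{1..n}. P (mu i)} \<subseteq> {i\<in>{1..n+1}. P (lam i)}"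
    using up il1 by auto
  then show "cM P \<le> cL P" unfolding cM_def cL_def by (intro card_mono) auto
  have "{i\<in>{1..n+1}. P (lam i)} \<subseteq> insert 1 (Suc ` {i\<in>{1..n}. P (mu i)})"
  proof
    fix i assume i: "i \<in> {i\<in>{1..n+1}. P (lam i)}"
    show "i \<in> insert 1 (Suc ` {i\<in>{1..n}. P (mu i)})"
    proof (cases "i = 1")
      case False
      define j where "j = i - 1"
      have j: "i = Suc j" "j \<in> {1..n}" using i False unfolding j_def by auto
      then have "P (mu j)" using up[of "lam (Suc j)" "mu j"] il2[of j] i by auto
      then show ?thesis using j by auto
    qed simp
  qed
  then have "cL P \<le> card (insert 1 (Suc ` {i\<in>{1..n}. P (mu i)}))"
    unfolding cL_def by (intro card_mono) auto
  also have "\<dots> \<le> card (Suc ` {i\<in>{1..n}. P (mu i)}) + 1"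
    by (simp add: card_insert_le_m1 card_insert_if)
  also have "\<dots> \<le> cM P + 1" unfolding cM_def by (simp add: card_image_le)
  finally show "cL P \<le> cM P + 1" .
qed

lemma ml_split: "mult_lam n lam v = cL (\<lambda>x. x \<ge> v) - cL (\<lambda>x. x > v)"
proof -
  have "{i\<in>{1..n+1}. lam i = v} = {i\<in>{1..n+1}. lam i \<ge> v} - {i\<in>{1..n+1}. lam i > v}" by auto
  then show ?thesis unfolding mult_lam_def cL_def by (simp add: card_Diff_subset subset_iff)
qed

lemma mm_split: "mult_mu n mu v = cM (\<lambda>x. x \<ge> v) - cM (\<lambda>x. x > v)"
proof -
  have "{i\<in>{1..n}. mu i = v} = {i\<in>{1..n}. mu i \<ge> v} - {i\<in>{1..n}. mu i > v}" by auto
  then show ?thesis unfolding mult_mu_def cM_def by (simp add: card_Diff_subset subset_iff)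
qed

lemma cL_mono: "cL (\<lambda>x. x > v) \<le> cL (\<lambda>x. x \<ge> v)"
  unfolding cL_def by (intro card_mono) auto
lemma cM_mono: "cM (\<lambda>x. x > v) \<le> cM (\<lambda>x. x \<ge> v)"
  unfolding cM_def by (intro card_mono) auto

lemma Kge: "cM (\<lambda>x. x \<ge> v) \<le> cL (\<lambda>x. x \<ge> v)" "cL (\<lambda>x. x \<ge> v) \<le> cM (\<lambda>x. x \<ge> v) + 1"
  by (rule K; auto)+
lemma Kgt: "cM (\<lambda>x. x > v) \<le> cL (\<lambda>x. x > v)" "cL (\<lambda>x. x > v) \<le> cM (\<lambda>x. x > v) + 1"
  by (rule K; auto)+

lemma trich: "is_M n lam mu v \<or> is_W n lam mu v \<or> is_P n lam mu v"
  unfolding is_M_def is_W_def is_P_def ml_split mm_split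
  using Kge[of v] Kgt[of v] cL_mono[of v] cM_mono[of v] by linarith

lemma M_above: "is_M n lam mu t \<Longrightarrow> cL (\<lambda>x. x > t) = cM (\<lambda>x. x > t) + 1"
  unfolding is_M_def ml_split mm_split
  using Kge[of t] Kgt[of t] cL_mono[of t] cM_mono[of t] by linarith

lemma excl: "is_M n lam mu v \<Longrightarrow> \<not> is_W n lam mu v" "is_M n lam mu v \<Longrightarrow> \<not> is_P n lam mu v"
  "is_W n lam mu v \<Longrightarrow> \<not> is_P n lam mu v"
  unfolding is_M_def is_W_def is_P_def by auto

abbreviation "SW \<equiv> {l\<in>lam_vals n lam. is_W n lam mu l}"
abbreviation "TM \<equiv> {t\<in>mu_vals n mu. is_M n lam mu t}"

lemma fin_lv: "finite (lam_vals n lam)" and fin_mv: "finite (mu_vals n mu)"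
  unfolding lam_vals_def mu_vals_def by auto

lemma fin_SW: "finite SW" and fin_TM: "finite TM"
  using fin_lv fin_mv by auto

lemma sum_lam_group: fixes f :: "real \<Rightarrow> real" shows "(\<Sum>i\<in>{1..n+1}. f (lam i)) = (\<Sum>v\<in>lam_vals n lam. f v * real (mult_lam n lam v))"
proof -
  have "(\<Sum>i\<in>{1..n+1}. f (lam i)) = (\<Sum>v\<in>lam ` {1..n+1}. \<Sum>i\<in>{i\<in>{1..n+1}. lam i = v}. f (lam i))"
    by (rule sum.image_gen) simp
  also have "\<dots> = (\<Sum>v\<in>lam_vals n lam. f v * mult_lam n lam v)"
    unfolding lam_vals_def mult_lam_def by (intro sum.cong refl) simp
  finally show ?thesis .
qed

lemma sum_mu_group: fixes f :: "real \<Rightarrow> real" shows "(\<Sum>i\<in>{1..n}. f (mu i)) = (\<Sum>v\<in>mu_vals n mu. f v * real (mult_mu n mu v))"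
proof -
  have "(\<Sum>i\<in>{1..n}. f (mu i)) = (\<Sum>v\<in>mu ` {1..n}. \<Sum>i\<in>{i\<in>{1..n}. mu i = v}. f (mu i))"
    by (rule sum.image_gen) simp
  also have "\<dots> = (\<Sum>v\<in>mu_vals n mu. f v * mult_mu n mu v)"
    unfolding mu_vals_def mult_mu_def by (intro sum.cong refl) simp
  finally show ?thesis .
qed

lemma ml_zero: "v \<notin> lam_vals n lam \<Longrightarrow> mult_lam n lam v = 0"
  unfolding lam_vals_def mult_lam_def by auto
lemma mm_zero: "v \<notin> mu_vals n mu \<Longrightarrow> mult_mu n mu v = 0"
  unfolding mu_vals_def mult_mu_def by auto

lemma GS: fixes f :: "real \<Rightarrow> real" shows "(\<Sum>i\<in>{1..n+1}. f (lam i)) - (\<Sum>i\<in>{1..n}. f (mu i)) = sum f SW - sum f TM"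
proof -
  let ?V = "lam_vals n lam \<union> mu_vals n mu"
  have finV: "finite ?V" using fin_lv fin_mv by simp
  have A: "(\<Sum>i\<in>{1..n+1}. f (lam i)) = (\<Sum>v\<in>?V. f v * mult_lam n lam v)"
    unfolding sum_lam_group by (rule sum.mono_neutral_left) (auto simp: finV ml_zero fin_lv fin_mv)
  have B: "(\<Sum>i\<in>{1..n}. f (mu i)) = (\<Sum>v\<in>?V. f v * mult_mu n mu v)"
    unfolding sum_mu_group by (rule sum.mono_neutral_left) (auto simp: finV mm_zero fin_lv fin_mv)
  have C: "f v * mult_lam n lam v - f v * mult_mu n mu v
      = (if is_W n lam mu v then f v else 0) - (if is_M n lam mu v then f v else 0)" for v
  proof -
    consider "is_M n lam mu v" | "is_W n lam mu v" | "is_P n lam mu v" using trich by blast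
    then show ?thesis
    proof cases
      case 1 then show ?thesis using excl[of v] by (auto simp: algebra_simps is_M_def)
    next
      case 2 then show ?thesis using excl[of v] by (auto simp: algebra_simps is_W_def)
    next
      case 3 then show ?thesis using excl[of v] unfolding is_P_def
        by (auto simp: algebra_simps is_M_def is_W_def)
    qed
  qed
  have SWe: "SW = {v\<in>?V. is_W n lam mu v}"
  proof -
    have "is_W n lam mu v \<Longrightarrow> v \<in> lam_vals n lam" for v
      using ml_zero[of v] unfolding is_W_def by auto
    then show ?thesis by auto
  qed
  have TMe: "TM = {v\<in>?V. is_M n lam mu v}"
  proof -
    have "is_M n lam mu v \<Longrightarrow> v \<in> mu_vals n mu" for v
      using mm_zero[of v] unfolding is_M_def by auto
    then show ?thesis by auto
  qed
  have "(\<Sum>i\<in>{1..n+1}. f (lam i)) - (\<Sum>i\<in>{1..n}. f (mu i))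
     = (\<Sum>v\<in>?V. (if is_W n lam mu v then f v else 0)) - (\<Sum>v\<in>?V. (if is_M n lam mu v then f v else 0))"
    unfolding A B sum_subtractf[symmetric] C ..
  also have "\<dots> = sum f SW - sum f TM"
    unfolding SWe TMe sum.inter_filter[OF finV] ..
  finally show ?thesis .
qed

lemma card_SW: "card SW = card TM + 1"
proof -
  have "real (card SW) - real (card TM) = 1" using GS[of "\<lambda>_. 1"] by simp
  then show ?thesis by linarith
qed

lemma c_SW: "c_const n lam mu = sum id SW - sum id TM"
  using GS[of id] unfolding c_const_def by simp

lemma M_above_vals:
  assumes "is_M n lam mu t"
  shows "card {l\<in>SW. l > t} = card {s\<in>TM. s > t} + 1"
proof -
  let ?f = "\<lambda>x. if x > t then 1 else (0::real)"
  have "(\<Sum>i\<in>{1..n+1}. ?f (lam i)) = real (cL (\<lambda>x. x > t))"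
    unfolding cL_def by (subst sum.inter_filter[symmetric]) auto
  moreover have "(\<Sum>i\<in>{1..n}. ?f (mu i)) = real (cM (\<lambda>x. x > t))"
    unfolding cM_def by (subst sum.inter_filter[symmetric]) auto
  moreover have "sum ?f SW = real (card {l\<in>SW. l > t})"
    using fin_SW by (subst sum.inter_filter[symmetric]) auto
  moreover have "sum ?f TM = real (card {s\<in>TM. s > t})"
    using fin_TM by (subst sum.inter_filter[symmetric]) auto
  ultimately show ?thesis using GS[of ?f] M_above[OF assms] by simp
qed

end


lemma prod_pos_iff_even:
  fixes g :: "'a \<Rightarrow> real"
  assumes "finite S" "\<forall>s\<in>S. g s \<noteq> 0"
  shows "(0 < prod g S) = even (card {s\<in>S. g s < 0})"
  using assms
proof (induction S rule: finite_induct)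
  case empty then show ?case by simp
next
  case (insert x F)
  have fx: "finite {s\<in>F. g s < 0}" using insert by simp
  have "{s\<in>insert x F. g s < 0} = (if g x < 0 then insert x {s\<in>F. g s < 0} else {s\<in>F. g s < 0})"
    by auto
  then have c: "card {s\<in>insert x F. g s < 0} = (if g x < 0 then Suc (card {s\<in>F. g s < 0}) else card {s\<in>F. g s < 0})"
    using insert fx by auto
  have gx: "g x \<noteq> 0" using insert by auto
  have IH: "(0 < prod g F) = even (card {s\<in>F. g s < 0})" using insert by auto
  have pF: "prod g F \<noteq> 0" using insert by auto
  show ?case
    unfolding c prod.insert[OF insert(1,2)]
    using IH gx pF zero_less_mult_iff[of "g x" "prod g F"] by auto
qed

context ilc begin

lemma TM_eq: "{t\<in>mu_vals n mu. is_M n lam mu t \<and> t \<noteq> m} = TM - {m}" by auto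

lemma r_sq:
  assumes t: "t \<in> TM"
  shows "(r_coef n lam mu t)\<^sup>2 = - (\<Prod>l\<in>SW. (t - l)) / (\<Prod>s\<in>TM - {t}. (t - s))"
proof -
  let ?A = "\<Prod>l\<in>SW. (t - l)" and ?B = "\<Prod>s\<in>TM - {t}. (t - s)"
  have x: "- ?A * (\<Prod>s\<in>TM - {t}. 1 / (t - s)) = - ?A / ?B"
    by (simp add: prod_dividef)
  have nW: "\<not> is_W n lam mu t" using t excl by auto
  have A0: "\<forall>l\<in>SW. t - l \<noteq> 0" using nW by auto
  have B0: "\<forall>s\<in>TM - {t}. t - s \<noteq> 0" by auto
  have An: "?A \<noteq> 0" using A0 fin_SW by auto
  have Bn: "?B \<noteq> 0" using B0 fin_TM by auto
  have eA: "(0 < ?A) = even (card {l\<in>SW. t - l < 0})"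
    by (rule prod_pos_iff_even[OF fin_SW A0])
  have eB: "(0 < ?B) = even (card {s\<in>TM - {t}. t - s < 0})"
    by (rule prod_pos_iff_even) (use fin_TM B0 in auto)
  have s1: "{l\<in>SW. t - l < 0} = {l\<in>SW. l > t}" by auto
  have s2: "{s\<in>TM - {t}. t - s < 0} = {s\<in>TM. s > t}" by auto
  have cnt: "card {l\<in>SW. l > t} = card {s\<in>TM. s > t} + 1"
    using M_above_vals t by auto
  have "0 < ?A \<longleftrightarrow> \<not> (0 < ?B)" using eA eB s1 s2 cnt by auto
  then have "?A / ?B < 0" using An Bn
    by (auto simp: divide_less_0_iff)
  then have "0 \<le> - ?A / ?B" by linarith
  then show ?thesis
    using t unfolding r_coef_def TM_eq x by simp
qed

lemma C_W:
  assumes w: "w \<in> mu_vals n mu" "is_W n lam mu w"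
  shows "C_coef n lam mu w = 0"
proof -
  have wl: "w \<in> lam_vals n lam" using w(2) ml_zero[of w] unfolding is_W_def by auto
  then have wSW: "w \<in> SW" using w by auto
  let ?R = "SW - {w}"
  have wT: "w \<notin> TM" using w excl by auto
  have tmq: "(r_coef n lam mu t)\<^sup>2 / (w - t) = (\<Prod>l\<in>?R. (t - l)) / (\<Prod>s\<in>TM - {t}. (t - s))"
    if t: "t \<in> TM" for t
  proof -
    have Aeq: "(\<Prod>l\<in>SW. (t - l)) = (t - w) * (\<Prod>l\<in>?R. (t - l))"
      using wSW fin_SW by (simp add: prod.remove)
    have "w - t \<noteq> 0" using t wT by auto
    moreover have "(\<Prod>s\<in>TM - {t}. (t - s)) \<noteq> 0" using fin_TM by auto
    ultimately show ?thesis unfolding r_sq[OF t] Aeq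
      by (simp add: field_simps)
  qed
  have "(\<Sum>t\<in>TM. (r_coef n lam mu t)\<^sup>2 / (w - t)) = Dd TM (\<lambda>x. \<Prod>l\<in>?R. (x - l))"
    unfolding Dd_def by (rule sum.cong) (auto simp: tmq)
  also have "\<dots> = sum id TM - sum id ?R"
  proof -
    have "card ?R = card TM" using card_SW wSW fin_SW by simp
    then show ?thesis using Dd_prod[of ?R TM] fin_SW fin_TM by simp
  qed
  also have "\<dots> = sum id TM - sum id SW + w"
    using wSW fin_SW by (simp add: sum_diff1)
  finally show ?thesis unfolding C_coef_def c_SW by simp
qed

end


context ilc begin

abbreviation "fi \<equiv> first_idx n mu"
abbreviation "rr \<equiv> r_coef n lam mu"

lemma mu_anti: "i \<in> {1..n} \<Longrightarrow> j \<in> {1..n} \<Longrightarrow> i \<le> j \<Longrightarrow> mu j \<le> mu i"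
proof (induction j)
  case 0 then show ?case by simp
next
  case (Suc j)
  show ?case
  proof (cases "i = Suc j")
    case False
    then have "i \<le> j" "j \<in> {1..n}" using Suc.prems by auto
    then have "mu j \<le> mu i" using Suc by auto
    moreover have "mu (Suc j) \<le> mu j"
      using il1[of "Suc j"] il2[of j] \<open>j \<in> {1..n}\<close> Suc.prems by auto
    ultimately show ?thesis by linarith
  qed simp
qed

lemma fi_props:
  assumes "m \<in> mu_vals n mu"
  shows "fi m \<in> {1..n}" "mu (fi m) = m" "\<And>j. j \<in> {1..n} \<Longrightarrow> mu j = m \<Longrightarrow> fi m \<le> j"
proof -
  obtain j0 where j0: "j0 \<in> {1..n}" "mu j0 = m" using assms unfolding mu_vals_def by auto
  have "fi m \<in> {1..n} \<and> mu (fi m) = m"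
    unfolding first_idx_def by (rule LeastI[of _ j0]) (use j0 in auto)
  then show "fi m \<in> {1..n}" "mu (fi m) = m" by auto
  show "\<And>j. j \<in> {1..n} \<Longrightarrow> mu j = m \<Longrightarrow> fi m \<le> j"
    unfolding first_idx_def by (rule Least_le) auto
qed

lemma mu_in: "j \<in> {1..n} \<Longrightarrow> mu j \<in> mu_vals n mu"
  unfolding mu_vals_def by auto

lemma block:
  assumes m: "m \<in> mu_vals n mu"
  shows "{j\<in>{1..n}. mu j = m} = {fi m..<fi m + mult_mu n mu m}"
proof -
  let ?S = "{j\<in>{1..n}. mu j = m}"
  have fin: "finite ?S" by simp
  have f1: "fi m \<in> {1..n}" and f2: "mu (fi m) = m" using fi_props[OF m] by blast+
  have ne: "fi m \<in> ?S" using f1 f2 by blast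
  define g where "g = Max ?S"
  have gS: "g \<in> ?S" unfolding g_def using fin ne by (intro Max_in) blast+
  have gmax: "\<And>j. j \<in> ?S \<Longrightarrow> j \<le> g" unfolding g_def using fin by (intro Max_ge) blast+
  have fmin: "\<And>j. j \<in> ?S \<Longrightarrow> fi m \<le> j" using fi_props(3)[OF m] by blast
  have g1: "g \<in> {1..n}" "mu g = m" using gS by blast+
  have Seq: "?S = {fi m..g}"
  proof (intro equalityI subsetI)
    fix j assume "j \<in> ?S"
    then show "j \<in> {fi m..g}" using gmax fmin by simp
  next
    fix j assume j: "j \<in> {fi m..g}"
    have j1: "j \<in> {1..n}" using j f1 g1 by simp
    have "mu j \<le> mu (fi m)" using mu_anti[of "fi m" j] j j1 f1 by simp
    moreover have "mu g \<le> mu j" using mu_anti[of j g] j j1 g1 by simp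
    ultimately have "mu j = m" using f2 g1 by simp
    then show "j \<in> ?S" using j1 by simp
  qed
  have fg: "fi m \<le> g" using gS fmin by blast
  have "mult_mu n mu m = card {fi m..g}" unfolding mult_mu_def Seq ..
  also have "\<dots> = g + 1 - fi m" by simp
  finally have "fi m + mult_mu n mu m = Suc g" using fg by simp
  then show ?thesis unfolding Seq by auto
qed

definition zr :: "nat \<Rightarrow> real" where
  "zr j = (if fi (mu j) = j then rr (mu j) else 0)"

lemma z_vec_zr: "z_vec n lam mu j = complex_of_real (zr j)"
  unfolding z_vec_def zr_def by simp

lemma r_nonM: "\<not> is_M n lam mu m \<Longrightarrow> rr m = 0"
  unfolding r_coef_def by auto

lemma r_nz: assumes "m \<in> TM" shows "rr m \<noteq> 0"
proof -
  have nW: "\<not> is_W n lam mu m" using assms excl by auto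
  have "(\<Prod>l\<in>SW. (m - l)) \<noteq> 0" using fin_SW nW by auto
  moreover have "(\<Prod>s\<in>TM - {m}. (m - s)) \<noteq> 0" using fin_TM by auto
  ultimately have "(rr m)\<^sup>2 \<noteq> 0" unfolding r_sq[OF assms] by simp
  then show ?thesis by auto
qed

lemma Z1: "\<not> is_M n lam mu (mu j) \<Longrightarrow> zr j = 0"
  unfolding zr_def using r_nonM by auto
lemma Z5: "fi (mu j) \<noteq> j \<Longrightarrow> zr j = 0"
  unfolding zr_def by auto
lemma Z2: "zr j \<noteq> 0 \<Longrightarrow> fi (mu j) = j \<and> is_M n lam mu (mu j)"
  using Z1 Z5 by blast
lemma Z3: "j \<in> {1..n} \<Longrightarrow> is_M n lam mu (mu j) \<Longrightarrow> fi (mu j) = j \<Longrightarrow> zr j \<noteq> 0"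
  unfolding zr_def using r_nz mu_in by auto

lemma RI:
  fixes g :: "real \<Rightarrow> real"
  shows "(\<Sum>k\<in>{1..n}. (zr k)\<^sup>2 * g (mu k)) = (\<Sum>t\<in>TM. (rr t)\<^sup>2 * g t)"
proof -
  let ?F = "{k\<in>{1..n}. fi (mu k) = k}"
  have "(\<Sum>k\<in>{1..n}. (zr k)\<^sup>2 * g (mu k)) = (\<Sum>k\<in>{1..n}. if fi (mu k) = k then (rr (mu k))\<^sup>2 * g (mu k) else 0)"
    unfolding zr_def by (intro sum.cong) auto
  also have "\<dots> = (\<Sum>k\<in>?F. (rr (mu k))\<^sup>2 * g (mu k))"
    by (rule sum.inter_filter[symmetric]) simp
  also have "\<dots> = (\<Sum>t\<in>mu ` ?F. (rr t)\<^sup>2 * g t)"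
  proof (rule sum.reindex[symmetric, unfolded comp_def])
    show "inj_on mu ?F"
    proof (rule inj_onI)
      fix x y assume "x \<in> ?F" "y \<in> ?F" "mu x = mu y"
      then have "fi (mu x) = x" "fi (mu y) = y" "mu x = mu y" by auto
      then show "x = y" by metis
    qed
  qed
  also have "mu ` ?F = mu_vals n mu"
  proof
    show "mu ` ?F \<subseteq> mu_vals n mu" unfolding mu_vals_def by auto
    show "mu_vals n mu \<subseteq> mu ` ?F"
    proof
      fix m assume m: "m \<in> mu_vals n mu"
      then have "fi m \<in> ?F" using fi_props[OF m] by auto
      then show "m \<in> mu ` ?F" using fi_props(2)[OF m] by force
    qed
  qed
  also have "(\<Sum>t\<in>mu_vals n mu. (rr t)\<^sup>2 * g t) = (\<Sum>t\<in>TM. (rr t)\<^sup>2 * g t)"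
    by (rule sum.mono_neutral_right) (auto simp: fin_mv r_nonM)
  finally show ?thesis .
qed

end


lemma mult_idx:
  assumes "A \<in> carrier_mat nr m" "B \<in> carrier_mat m nc" "i < nr" "j < nc"
  shows "(A * B) $$ (i,j) = (\<Sum>k<m. A $$ (i,k) * B $$ (k,j))"
  using assms by (simp add: scalar_prod_def atLeast0LessThan)

lemma sum_split0: "(\<Sum>k<Suc n. f k) = f 0 + (\<Sum>k\<in>{1..n}. f k)"
proof -
  have "{..<Suc n} = insert 0 {1..n}" by auto
  then show ?thesis by simp
qed

lemma adj_idx:
  assumes "i < dim_col A" "j < dim_row A"
  shows "mat_adjoint A $$ (i,j) = cnj (A $$ (j,i))"
  using assms unfolding mat_adjoint_def by (simp add: mat_of_rows_index cols_nth)

lemma adj_dim: "dim_row (mat_adjoint A) = dim_col A" "dim_col (mat_adjoint A) = dim_row A"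
  unfolding mat_adjoint_def by simp_all

lemma u_skew:
  assumes "X \<in> u_alg N" "i < N" "j < N"
  shows "X $$ (i,j) = - cnj (X $$ (j,i))"
proof -
  have X: "X \<in> carrier_mat N N" "mat_adjoint X = - X" using assms unfolding u_alg_def by auto
  have "mat_adjoint X $$ (i,j) = (- X) $$ (i,j)" using X by simp
  moreover have "mat_adjoint X $$ (i,j) = cnj (X $$ (j,i))" by (rule adj_idx) (use X(1) assms in auto)
  moreover have "(- X) $$ (i,j) = - X $$ (i,j)" using X assms by simp
  ultimately have "cnj (X $$ (j,i)) = - X $$ (i,j)" by simp
  then show ?thesis by (metis minus_minus)
qed

lemma u_skew_diag: "X \<in> u_alg N \<Longrightarrow> i < N \<Longrightarrow> Re (X $$ (i,i)) = 0"
  using u_skew[of X N i i] by (simp add: complex_eq_iff)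

lemma u_carrier: "X \<in> u_alg N \<Longrightarrow> X \<in> carrier_mat N N"
  unfolding u_alg_def by auto

lemma u_algI:
  assumes "X \<in> carrier_mat N N" "\<And>i j. i < N \<Longrightarrow> j < N \<Longrightarrow> X $$ (i,j) = - cnj (X $$ (j,i))"
  shows "X \<in> u_alg N"
proof -
  have "mat_adjoint X = - X"
  proof (rule eq_matI)
    fix i j assume "i < dim_row (- X)" "j < dim_col (- X)"
    then have ij: "i < N" "j < N" using assms(1) by auto
    have "mat_adjoint X $$ (i,j) = cnj (X $$ (j,i))" using ij assms(1) by (simp add: adj_idx)
    also have "X $$ (j,i) = - cnj (X $$ (i,j))" using assms(2)[OF ij(2,1)] .
    finally show "mat_adjoint X $$ (i,j) = (- X) $$ (i,j)" using ij assms(1) by simp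
  qed (use assms(1) in \<open>simp_all add: adj_dim\<close>)
  then show ?thesis using assms unfolding u_alg_def by auto
qed

lemma mtr_mult:
  assumes "A \<in> carrier_mat N N" "B \<in> carrier_mat N N"
  shows "mtrace (A * B) = (\<Sum>i<N. \<Sum>k<N. A $$ (i,k) * B $$ (k,i))"
proof -
  have "dim_row (A * B) = N" using assms by simp
  moreover have "(A * B) $$ (i,i) = (\<Sum>k<N. A $$ (i,k) * B $$ (k,i))" if "i < N" for i
    by (rule mult_idx[OF assms that that])
  ultimately show ?thesis unfolding mtrace_def by simp
qed

lemma mtr_comm:
  assumes "A \<in> carrier_mat N N" "B \<in> carrier_mat N N"
  shows "mtrace (A * B) = mtrace (B * A)"
  unfolding mtr_mult[OF assms] mtr_mult[OF assms(2,1)]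
  by (subst sum.swap) (simp add: mult.commute)

lemma mtr_minus:
  assumes "A \<in> carrier_mat N N" "B \<in> carrier_mat N N"
  shows "mtrace (A - B) = mtrace A - mtrace B"
  unfolding mtrace_def using assms by (simp add: sum_subtractf)

context ilc begin

abbreviation "pp \<equiv> p_tilde n lam mu"
abbreviation "cc \<equiv> c_const n lam mu"

lemma p_carrier: "pp \<in> carrier_mat (n+1) (n+1)"
  unfolding p_tilde_def by simp

lemma p_idx:
  assumes "i < n+1" "j < n+1"
  shows "pp $$ (i,j) = (if i = 0 \<and> j = 0 then complex_of_real cc
     else if i = 0 then complex_of_real (zr j)
     else if j = 0 then complex_of_real (zr i)
     else if i = j then complex_of_real (mu i) else 0)"
  using assms unfolding p_tilde_def by (simp add: z_vec_zr)

lemma p_herm: "i < n+1 \<Longrightarrow> j < n+1 \<Longrightarrow> pp $$ (i,j) = cnj (pp $$ (j,i))"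
  by (simp add: p_idx)

lemma E1:
  assumes X: "X \<in> carrier_mat (n+1) (n+1)" and i: "i \<in> {1..n}" and j: "j \<in> {1..n}"
  shows "(comm X pp) $$ (i,j) = X $$ (i,0) * zr j + X $$ (i,j) * mu j
      - zr i * X $$ (0,j) - mu i * X $$ (i,j)"
proof -
  have a: "(X * pp) $$ (i,j) = X $$ (i,0) * zr j + X $$ (i,j) * mu j"
  proof -
    have "(X * pp) $$ (i,j) = (\<Sum>k<Suc n. X $$ (i,k) * pp $$ (k,j))"
      using mult_idx[OF X p_carrier] i j by simp
    also have "\<dots> = X $$ (i,0) * zr j + (\<Sum>k\<in>{1..n}. X $$ (i,k) * (if k = j then complex_of_real (mu j) else 0))"
      unfolding sum_split0 using j by (intro arg_cong2[where f="(+)"] sum.cong) (auto simp: p_idx)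
    also have "\<dots> = X $$ (i,0) * zr j + X $$ (i,j) * mu j"
      using j by (simp add: if_distrib cong: if_cong)
    finally show ?thesis .
  qed
  have b: "(pp * X) $$ (i,j) = zr i * X $$ (0,j) + mu i * X $$ (i,j)"
  proof -
    have "(pp * X) $$ (i,j) = (\<Sum>k<Suc n. pp $$ (i,k) * X $$ (k,j))"
      using mult_idx[OF p_carrier X] i j by simp
    also have "\<dots> = zr i * X $$ (0,j) + (\<Sum>k\<in>{1..n}. if k = i then complex_of_real (mu i) * X $$ (k,j) else 0)"
      unfolding sum_split0 using i by (intro arg_cong2[where f="(+)"] sum.cong) (auto simp: p_idx)
    also have "\<dots> = zr i * X $$ (0,j) + mu i * X $$ (i,j)"
      using i by (simp add: if_distrib cong: if_cong)
    finally show ?thesis .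
  qed
  show ?thesis unfolding comm_def using a b X i j p_carrier by simp
qed

lemma E2:
  assumes X: "X \<in> carrier_mat (n+1) (n+1)" and i: "i \<in> {1..n}"
  shows "(comm X pp) $$ (i,0) = X $$ (i,0) * cc + (\<Sum>k\<in>{1..n}. X $$ (i,k) * zr k)
      - zr i * X $$ (0,0) - mu i * X $$ (i,0)"
proof -
  have a: "(X * pp) $$ (i,0) = X $$ (i,0) * cc + (\<Sum>k\<in>{1..n}. X $$ (i,k) * zr k)"
  proof -
    have "(X * pp) $$ (i,0) = (\<Sum>k<Suc n. X $$ (i,k) * pp $$ (k,0))"
      using mult_idx[OF X p_carrier] i by simp
    also have "\<dots> = X $$ (i,0) * cc + (\<Sum>k\<in>{1..n}. X $$ (i,k) * zr k)"
      unfolding sum_split0 by (intro arg_cong2[where f="(+)"] sum.cong) (auto simp: p_idx)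
    finally show ?thesis .
  qed
  have b: "(pp * X) $$ (i,0) = zr i * X $$ (0,0) + mu i * X $$ (i,0)"
  proof -
    have "(pp * X) $$ (i,0) = (\<Sum>k<Suc n. pp $$ (i,k) * X $$ (k,0))"
      using mult_idx[OF p_carrier X] i by simp
    also have "\<dots> = zr i * X $$ (0,0) + (\<Sum>k\<in>{1..n}. if k = i then complex_of_real (mu i) * X $$ (k,0) else 0)"
      unfolding sum_split0 using i by (intro arg_cong2[where f="(+)"] sum.cong) (auto simp: p_idx)
    also have "\<dots> = zr i * X $$ (0,0) + mu i * X $$ (i,0)"
      using i by (simp add: if_distrib cong: if_cong)
    finally show ?thesis .
  qed
  show ?thesis unfolding comm_def using a b X i p_carrier by simp
qed

lemma comm_herm:
  assumes X: "X \<in> u_alg (n+1)" and i: "i < n+1" and j: "j < n+1"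
  shows "(comm X pp) $$ (i,j) = cnj ((comm X pp) $$ (j,i))"
proof -
  have Xc: "X \<in> carrier_mat (n+1) (n+1)" using X by (rule u_carrier)
  have cm: "(comm X pp) $$ (a,b) = (\<Sum>k<n+1. X $$ (a,k) * pp $$ (k,b)) - (\<Sum>k<n+1. pp $$ (a,k) * X $$ (k,b))"
    if ab: "a < n+1" "b < n+1" for a b
  proof -
    have "(comm X pp) $$ (a,b) = (X * pp) $$ (a,b) - (pp * X) $$ (a,b)"
      unfolding comm_def using Xc p_carrier ab by simp
    then show ?thesis unfolding mult_idx[OF Xc p_carrier ab] mult_idx[OF p_carrier Xc ab] .
  qed
  have "(comm X pp) $$ (i,j) = (\<Sum>k<n+1. X $$ (i,k) * pp $$ (k,j)) - (\<Sum>k<n+1. pp $$ (i,k) * X $$ (k,j))"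
    by (rule cm[OF i j])
  moreover have "(comm X pp) $$ (j,i) = (\<Sum>k<n+1. X $$ (j,k) * pp $$ (k,i)) - (\<Sum>k<n+1. pp $$ (j,k) * X $$ (k,i))"
    by (rule cm[OF j i])
  moreover have "cnj (\<Sum>k<n+1. X $$ (j,k) * pp $$ (k,i)) = - (\<Sum>k<n+1. pp $$ (i,k) * X $$ (k,j))"
    unfolding cnj_sum sum_negf[symmetric]
  proof (rule sum.cong)
    fix k assume k: "k \<in> {..<n+1}"
    have e1: "X $$ (j,k) = - cnj (X $$ (k,j))" using u_skew[OF X j] k by simp
    have e2: "pp $$ (k,i) = cnj (pp $$ (i,k))" using p_herm[OF _ i] k by simp
    show "cnj (X $$ (j,k) * pp $$ (k,i)) = - (pp $$ (i,k) * X $$ (k,j))"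
      unfolding e1 e2 by (simp add: mult.commute)
  qed simp
  moreover have "cnj (\<Sum>k<n+1. pp $$ (j,k) * X $$ (k,i)) = - (\<Sum>k<n+1. X $$ (i,k) * pp $$ (k,j))"
    unfolding cnj_sum sum_negf[symmetric]
  proof (rule sum.cong)
    fix k assume k: "k \<in> {..<n+1}"
    have e1: "X $$ (k,i) = - cnj (X $$ (i,k))" using u_skew[OF X _ i] k by simp
    have e2: "pp $$ (j,k) = cnj (pp $$ (k,j))" using p_herm[OF j] k by simp
    show "cnj (pp $$ (j,k) * X $$ (k,i)) = - (X $$ (i,k) * pp $$ (k,j))"
      unfolding e1 e2 by (simp add: mult.commute)
  qed simp
  ultimately show ?thesis by simp
qed

end


lemma mtr_md:
  assumes P: "P \<in> carrier_mat N N" and A: "A \<in> carrier_mat N N" and B: "B \<in> carrier_mat N N"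
  shows "mtrace (P * (A - B)) = mtrace (P * A) - mtrace (P * B)"
proof -
  have "P * (A - B) = P * A - P * B" by (rule mult_minus_distrib_mat[OF P A B])
  moreover have "P * A \<in> carrier_mat N N" "P * B \<in> carrier_mat N N" using P A B by auto
  ultimately show ?thesis using mtr_minus by metis
qed

lemma mtr_dm:
  assumes P: "P \<in> carrier_mat N N" and A: "A \<in> carrier_mat N N" and B: "B \<in> carrier_mat N N"
  shows "mtrace ((A - B) * P) = mtrace (A * P) - mtrace (B * P)"
proof -
  have "(A - B) * P = A * P - B * P" by (rule minus_mult_distrib_mat[OF A B P])
  moreover have "A * P \<in> carrier_mat N N" "B * P \<in> carrier_mat N N" using P A B by auto
  ultimately show ?thesis using mtr_minus by metis
qed

lemma TP:
  assumes P: "P \<in> carrier_mat N N" and A: "A \<in> carrier_mat N N" and B: "B \<in> carrier_mat N N"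
  shows "mtrace (P * comm A B) = mtrace (A * comm B P)"
proof -
  have "mtrace (P * comm A B) = mtrace (P * (A * B)) - mtrace (P * (B * A))"
    unfolding comm_def using P A B by (intro mtr_md) auto
  also have "mtrace (P * (A * B)) = mtrace (A * (B * P))"
    using mtr_comm[of P N "A * B"] P A B by simp
  also have "mtrace (P * (B * A)) = mtrace (A * (P * B))"
    using mtr_comm[of "P * B" N A] P A B by simp
  also have "mtrace (A * (B * P)) - mtrace (A * (P * B)) = mtrace (A * comm B P)"
    unfolding comm_def using P A B by (intro mtr_md[symmetric]) auto
  finally show ?thesis .
qed

lemma TS:
  assumes P: "P \<in> carrier_mat N N" and A: "A \<in> carrier_mat N N" and B: "B \<in> carrier_mat N N"
  shows "mtrace (A * comm B P) = - mtrace (comm A P * B)"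
proof -
  have "mtrace (A * comm B P) = mtrace (A * (B * P)) - mtrace (A * (P * B))"
    unfolding comm_def using P A B by (intro mtr_md) auto
  also have "mtrace (A * (B * P)) = mtrace (P * A * B)"
    using mtr_comm[of "A * B" N P] P A B by simp
  also have "mtrace (A * (P * B)) = mtrace (A * P * B)"
    using P A B by simp
  also have "mtrace (P * A * B) - mtrace (A * P * B) = - mtrace (comm A P * B)"
    unfolding comm_def using P A B mtr_dm[of B N "A * P" "P * A"] by simp
  finally show ?thesis .
qed

lemma omega_eq:
  assumes P: "P \<in> carrier_mat N N" and X: "X \<in> u_alg N" and Y: "Y \<in> u_alg N"
  shows "omega_KKS P (comm X P) (comm Y P) = (1 / \<i>) * mtrace (X * comm Y P)"
proof -
  define X' where "X' = (SOME X'. X' \<in> u_alg (dim_row P) \<and> comm X' P = comm X P)"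
  define Y' where "Y' = (SOME Y'. Y' \<in> u_alg (dim_row P) \<and> comm Y' P = comm Y P)"
  have dP: "dim_row P = N" using P by simp
  have hX: "X' \<in> u_alg N \<and> comm X' P = comm X P"
    unfolding X'_def dP by (rule someI[of _ X]) (use X in simp)
  have hY: "Y' \<in> u_alg N \<and> comm Y' P = comm Y P"
    unfolding Y'_def dP by (rule someI[of _ Y]) (use Y in simp)
  have cX: "X \<in> carrier_mat N N" "X' \<in> carrier_mat N N" "Y \<in> carrier_mat N N" "Y' \<in> carrier_mat N N"
    using X Y hX hY u_carrier by blast+
  have om: "omega_KKS P (comm X P) (comm Y P) = (1 / \<i>) * mtrace (P * comm X' Y')"
    unfolding omega_KKS_def Let_def X'_def[symmetric] Y'_def[symmetric] ..
  have "mtrace (P * comm X' Y') = mtrace (X' * comm Y' P)" by (rule TP[OF P cX(2,4)])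
  also have "\<dots> = - mtrace (comm X' P * Y')" by (rule TS[OF P cX(2,4)])
  also have "\<dots> = - mtrace (comm X P * Y')" using hX by simp
  also have "\<dots> = mtrace (X * comm Y' P)" using TS[OF P cX(1,4)] by simp
  also have "\<dots> = mtrace (X * comm Y P)" using hY by simp
  finally show ?thesis unfolding om by simp
qed

lemma dsum_delta:
  fixes f :: "nat \<Rightarrow> nat \<Rightarrow> complex"
  assumes "J < N" "K < N"
  shows "(\<Sum>i<N. \<Sum>k<N. f i k * (if k = J \<and> i = K then al else 0)) = f K J * al"
proof -
  have "(\<Sum>i<N. \<Sum>k<N. f i k * (if k = J \<and> i = K then al else 0))
      = (\<Sum>i<N. if i = K then f i J * al else 0)"
  proof (rule sum.cong)
    fix i assume "i \<in> {..<N}"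
    have "(\<Sum>k<N. f i k * (if k = J \<and> i = K then al else 0)) = (\<Sum>k<N. if k = J then (if i = K then f i k * al else 0) else 0)"
      by (rule sum.cong) auto
    also have "\<dots> = (if i = K then f i J * al else 0)" using assms by (simp add: sum.delta)
    finally show "(\<Sum>k<N. f i k * (if k = J \<and> i = K then al else 0)) = (if i = K then f i J * al else 0)" .
  qed simp
  also have "\<dots> = f K J * al" using assms by (simp add: sum.delta)
  finally show ?thesis .
qed

context ilc begin

definition xg :: "nat \<Rightarrow> nat \<Rightarrow> complex \<Rightarrow> nat \<times> nat \<Rightarrow> complex" where
  "xg J K al = (\<lambda>(x,y). (if Suc x = J \<and> Suc y = K then al else 0) + (if Suc x = K \<and> Suc y = J then - cnj al else 0))"

definition xi :: "nat \<Rightarrow> nat \<Rightarrow> complex \<Rightarrow> complex mat" where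
  "xi J K al = four_block_mat (0\<^sub>m 1 1) (0\<^sub>m 1 n) (0\<^sub>m n 1) (mat n n (xg J K al))"

lemma xi_carrier: "xi J K al \<in> carrier_mat (n+1) (n+1)"
proof -
  have "xi J K al \<in> carrier_mat (1+n) (1+n)"
    unfolding xi_def by (rule four_block_carrier_mat) auto
  then show ?thesis by (simp only: add.commute)
qed

lemma xi_idx0:
  assumes i: "i < n+1" and k: "k < n+1"
  shows "xi J K al $$ (i,k) = (if i = 0 \<or> k = 0 then 0 else xg J K al (i - 1, k - 1))"
proof -
  have d: "i < dim_row (0\<^sub>m 1 1 :: complex mat) + dim_row (mat n n (xg J K al))"
     "k < dim_col (0\<^sub>m 1 1 :: complex mat) + dim_col (mat n n (xg J K al))" using i k by simp_all
  show ?thesis unfolding xi_def index_mat_four_block(1)[OF d] using i k by simp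
qed

lemma xi_idx:
  assumes J: "J \<in> {1..n}" and K: "K \<in> {1..n}" and i: "i < n+1" and k: "k < n+1"
  shows "xi J K al $$ (i,k) = (if i = J \<and> k = K then al else 0) + (if i = K \<and> k = J then - cnj al else 0)"
proof (cases "i = 0 \<or> k = 0")
  case True
  have e: "xi J K al $$ (i,k) = 0" using xi_idx0[OF i k] True by (simp only: if_True)
  have c1: "(i = J \<and> k = K) = False" "(i = K \<and> k = J) = False" using True J K by auto
  show ?thesis unfolding e c1 if_False by simp
next
  case False
  have "xi J K al $$ (i,k) = xg J K al (i - 1, k - 1)"
    using xi_idx0[OF i k] False by simp
  then have e: "xi J K al $$ (i,k) = (if Suc (i - 1) = J \<and> Suc (k - 1) = K then al else 0) + (if Suc (i - 1) = K \<and> Suc (k - 1) = J then - cnj al else 0)"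
    unfolding xg_def by simp
  have s: "Suc (i - 1) = i" "Suc (k - 1) = k" using False by auto
  show ?thesis unfolding e s ..
qed

lemma skew_pair:
  fixes al :: complex
  assumes "P' = Q" "Q' = P"
  shows "(if P then al else 0) + (if Q then - cnj al else 0) = - cnj ((if P' then al else 0) + (if Q' then - cnj al else 0))"
  unfolding assms by (cases P; cases Q) simp_all

lemma xi_k: assumes "J \<in> {1..n}" "K \<in> {1..n}" shows "xi J K al \<in> k_alg n"
proof -
  have "mat n n (xg J K al) \<in> u_alg n"
  proof (rule u_algI)
    fix i j assume ij: "i < n" "j < n"
    have "xg J K al (i,j) = - cnj (xg J K al (j,i))"
      unfolding xg_def split by (rule skew_pair) blast+
    then show "mat n n (xg J K al) $$ (i,j) = - cnj (mat n n (xg J K al) $$ (j,i))"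
      using ij by (simp only: index_mat)
  qed simp
  then show ?thesis unfolding xi_def k_alg_def by blast
qed

lemma xi_u: assumes J: "J \<in> {1..n}" and K: "K \<in> {1..n}" shows "xi J K al \<in> u_alg (n+1)"
proof (rule u_algI[OF xi_carrier])
  fix i j assume ij: "i < n+1" "j < n+1"
  show "xi J K al $$ (i,j) = - cnj (xi J K al $$ (j,i))"
    unfolding xi_idx[OF J K ij] xi_idx[OF J K ij(2,1)] by (rule skew_pair) blast+
qed

lemma perp_zero:
  assumes a: "a \<in> tangent_K_perp n pp" and X: "X \<in> u_alg (n+1)" and aX: "a = comm X pp"
    and J: "J \<in> {1..n}" and K: "K \<in> {1..n}"
  shows "a $$ (J,K) = 0"
proof -
  have Xc: "X \<in> carrier_mat (n+1) (n+1)" using X by (rule u_carrier)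
  have ac: "a \<in> carrier_mat (n+1) (n+1)" unfolding aX comm_def
    by (rule minus_carrier_mat) (use Xc p_carrier in simp)
  have tr: "mtrace (a * xi J K al) = a $$ (K,J) * al + a $$ (J,K) * (- cnj al)" for al
  proof -
    have "mtrace (a * xi J K al) = (\<Sum>i<n+1. \<Sum>k<n+1. a $$ (i,k) * xi J K al $$ (k,i))"
      by (rule mtr_mult[OF ac xi_carrier])
    also have "\<dots> = (\<Sum>i<n+1. \<Sum>k<n+1. a $$ (i,k) * (if k = J \<and> i = K then al else 0))
        + (\<Sum>i<n+1. \<Sum>k<n+1. a $$ (i,k) * (if k = K \<and> i = J then - cnj al else 0))"
      unfolding sum.distrib[symmetric]
    proof (intro sum.cong refl)
      fix i k assume "i \<in> {..<n+1}" "k \<in> {..<n+1}"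
      then have ik: "k < n+1" "i < n+1" by auto
      show "a $$ (i,k) * xi J K al $$ (k,i) = a $$ (i,k) * (if k = J \<and> i = K then al else 0)
          + a $$ (i,k) * (if k = K \<and> i = J then - cnj al else 0)"
        unfolding xi_idx[OF J K ik] distrib_left ..
    qed
    also have "\<dots> = a $$ (K,J) * al + a $$ (J,K) * (- cnj al)"
    proof -
      have d1: "(\<Sum>i<n+1. \<Sum>k<n+1. a $$ (i,k) * (if k = J \<and> i = K then al else 0)) = a $$ (K,J) * al"
        by (rule dsum_delta) (use J K in auto)
      have d2: "(\<Sum>i<n+1. \<Sum>k<n+1. a $$ (i,k) * (if k = K \<and> i = J then - cnj al else 0)) = a $$ (J,K) * (- cnj al)"
        by (rule dsum_delta) (use J K in auto)
      show ?thesis unfolding d1 d2 ..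
    qed
    finally show ?thesis .
  qed
  have z: "mtrace (a * xi J K al) = 0" for al
  proof -
    have t: "comm (xi J K al) pp \<in> tangent_K_orbit n pp"
      unfolding tangent_K_orbit_def using xi_k[OF J K] by blast
    then have "omega_KKS pp a (comm (xi J K al) pp) = 0" using a unfolding tangent_K_perp_def by blast
    then have "(1 / \<i>) * mtrace (X * comm (xi J K al) pp) = 0"
      unfolding aX omega_eq[OF p_carrier X xi_u[OF J K]] .
    then have "mtrace (X * comm (xi J K al) pp) = 0" by simp
    then show ?thesis using TS[OF p_carrier Xc xi_carrier] aX by simp
  qed
  have 1: "a $$ (K,J) - a $$ (J,K) = 0" using tr[of 1] z[of 1] by simp
  have 2: "a $$ (K,J) * \<i> + a $$ (J,K) * \<i> = 0" using tr[of \<i>] z[of \<i>] by simp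
  have "(a $$ (K,J) + a $$ (J,K)) * \<i> = 0" using 2 by (simp add: distrib_right)
  then have 3: "a $$ (K,J) + a $$ (J,K) = 0" by simp
  from 1 have "a $$ (K,J) = a $$ (J,K)" by simp
  then have "2 * a $$ (J,K) = 0" using 3 by simp
  then show ?thesis by simp
qed

end


context ilc begin

definition goodX :: "complex mat \<Rightarrow> bool" where
  "goodX X \<longleftrightarrow> X \<in> u_alg (n+1) \<and> (\<forall>i\<in>{1..n}. \<forall>j\<in>{1..n}. (comm X pp) $$ (i,j) = 0)"

lemma goodD:
  assumes "goodX X"
  shows "X \<in> u_alg (n+1)" "X \<in> carrier_mat (n+1) (n+1)"
    "\<And>i j. i \<in> {1..n} \<Longrightarrow> j \<in> {1..n} \<Longrightarrow> (comm X pp) $$ (i,j) = 0"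
  using assms u_carrier unfolding goodX_def by auto

lemma E1z:
  assumes "goodX X" "i \<in> {1..n}" "j \<in> {1..n}"
  shows "X $$ (i,0) * zr j + X $$ (i,j) * mu j - zr i * X $$ (0,j) - mu i * X $$ (i,j) = 0"
  using E1[OF goodD(2)[OF assms(1)] assms(2,3)] goodD(3)[OF assms] by simp

lemma G2:
  assumes g: "goodX X" and j: "j \<in> {1..n}" and M: "is_M n lam mu (mu j)" and nf: "fi (mu j) \<noteq> j"
  shows "X $$ (j,0) = 0"
proof -
  define k where "k = fi (mu j)"
  have k: "k \<in> {1..n}" "mu k = mu j" using fi_props[OF mu_in[OF j]] unfolding k_def by auto
  have fk: "fi (mu k) = k" using k unfolding k_def by simp
  have zk: "zr k \<noteq> 0" using Z3[OF k(1)] M k fk by simp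
  have zj: "zr j = 0" using Z5 nf by simp
  have "X $$ (j,0) * zr k + X $$ (j,k) * mu k - zr j * X $$ (0,k) - mu j * X $$ (j,k) = 0"
    by (rule E1z[OF g j k(1)])
  then have "X $$ (j,0) * zr k = 0" using k(2) zj by (simp add: algebra_simps)
  then show ?thesis using zk by simp
qed

lemma G3:
  assumes g: "goodX X" and j: "j \<in> {1..n}" and M: "is_M n lam mu (mu j)" and f: "fi (mu j) = j"
  shows "Re (X $$ (j,0)) = 0"
proof -
  have zj: "zr j \<noteq> 0" using Z3[OF j M f] .
  have sk: "X $$ (0,j) = - cnj (X $$ (j,0))" using u_skew[OF goodD(1)[OF g], of 0 j] j by simp
  have "X $$ (j,0) * zr j + X $$ (j,j) * mu j - zr j * X $$ (0,j) - mu j * X $$ (j,j) = 0"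
    by (rule E1z[OF g j j])
  then have "zr j * (X $$ (j,0) + cnj (X $$ (j,0))) = 0" unfolding sk by (simp add: algebra_simps)
  then have "X $$ (j,0) + cnj (X $$ (j,0)) = 0" using zj by simp
  then have "Re (X $$ (j,0) + cnj (X $$ (j,0))) = 0" by simp
  then show ?thesis by simp
qed

lemma G1:
  assumes g: "goodX X" and j: "j \<in> {1..n}" and nM: "\<not> is_M n lam mu (mu j)"
  shows "(comm X pp) $$ (j,0) = C_coef n lam mu (mu j) * X $$ (j,0)"
proof -
  have zj: "zr j = 0" using Z1 nM by simp
  have tk: "X $$ (j,k) * zr k = X $$ (j,0) * complex_of_real ((zr k)\<^sup>2 * (1 / (mu j - mu k)))"
    if k: "k \<in> {1..n}" for k
  proof (cases "zr k = 0")
    case True then show ?thesis by simp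
  next
    case False
    then have "is_M n lam mu (mu k)" using Z2 by blast
    then have d: "mu j - mu k \<noteq> 0" using nM by auto
    have "X $$ (j,0) * zr k + X $$ (j,k) * mu k - zr j * X $$ (0,k) - mu j * X $$ (j,k) = 0"
      by (rule E1z[OF g j k])
    then have e: "X $$ (j,k) * complex_of_real (mu j - mu k) = X $$ (j,0) * zr k"
      using zj by (simp add: algebra_simps)
    have d': "complex_of_real (mu j - mu k) \<noteq> 0" using d by simp
    have "X $$ (j,k) * zr k = (X $$ (j,k) * complex_of_real (mu j - mu k)) * zr k / complex_of_real (mu j - mu k)"
      using d' by simp
    also have "\<dots> = X $$ (j,0) * zr k * zr k / complex_of_real (mu j - mu k)" unfolding e ..
    also have "\<dots> = X $$ (j,0) * complex_of_real ((zr k)\<^sup>2 * (1 / (mu j - mu k)))"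
      by (simp add: power2_eq_square)
    finally show ?thesis .
  qed
  have S: "(\<Sum>k\<in>{1..n}. X $$ (j,k) * zr k) = X $$ (j,0) * complex_of_real (\<Sum>t\<in>TM. (rr t)\<^sup>2 * (1 / (mu j - t)))"
  proof -
    have "(\<Sum>k\<in>{1..n}. X $$ (j,k) * zr k) = (\<Sum>k\<in>{1..n}. X $$ (j,0) * complex_of_real ((zr k)\<^sup>2 * (1 / (mu j - mu k))))"
      by (rule sum.cong) (simp_all add: tk)
    also have "\<dots> = X $$ (j,0) * complex_of_real (\<Sum>k\<in>{1..n}. (zr k)\<^sup>2 * (1 / (mu j - mu k)))"
      by (simp add: sum_distrib_left)
    also have "(\<Sum>k\<in>{1..n}. (zr k)\<^sup>2 * (1 / (mu j - mu k))) = (\<Sum>t\<in>TM. (rr t)\<^sup>2 * (1 / (mu j - t)))"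
      by (rule RI)
    finally show ?thesis .
  qed
  have C: "C_coef n lam mu (mu j) = cc - mu j + (\<Sum>t\<in>TM. (rr t)\<^sup>2 * (1 / (mu j - t)))"
    unfolding C_coef_def by simp
  show ?thesis unfolding E2[OF goodD(2)[OF g] j] S C zj by (simp add: algebra_simps)
qed

lemma G4:
  assumes g: "goodX X" and j: "j \<in> {1..n}" and M: "is_M n lam mu (mu j)" and f: "fi (mu j) = j"
  shows "Re ((comm X pp) $$ (j,0)) = 0"
proof -
  have Xu: "X \<in> u_alg (n+1)" using goodD(1)[OF g] .
  have rj: "Re (X $$ (j,0)) = 0" by (rule G3[OF g j M f])
  have r00: "Re (X $$ (0,0)) = 0" using u_skew_diag[OF Xu] by simp
  have tk: "Re (X $$ (j,k) * zr k) = 0" if k: "k \<in> {1..n}" for k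
  proof (cases "zr k = 0")
    case True then show ?thesis by simp
  next
    case False
    then have Mk: "is_M n lam mu (mu k)" and fk: "fi (mu k) = k" using Z2 by blast+
    have "Re (X $$ (j,k)) = 0"
    proof (cases "k = j")
      case True then show ?thesis using u_skew_diag[OF Xu] j by simp
    next
      case False
      have d: "mu k - mu j \<noteq> 0" using False f fk by auto
      have rk: "Re (X $$ (k,0)) = 0" by (rule G3[OF g k Mk fk])
      have sk: "X $$ (0,k) = - cnj (X $$ (k,0))" using u_skew[OF Xu, of 0 k] k by simp
      have "X $$ (j,0) * zr k + X $$ (j,k) * mu k - zr j * X $$ (0,k) - mu j * X $$ (j,k) = 0"
        by (rule E1z[OF g j k])
      then have "Re (X $$ (j,0) * zr k + X $$ (j,k) * mu k - zr j * X $$ (0,k) - mu j * X $$ (j,k)) = 0"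
        by simp
      then have "Re (X $$ (j,k)) * (mu k - mu j) = 0" using rj rk unfolding sk by (simp add: algebra_simps)
      then show ?thesis using d by simp
    qed
    then show ?thesis by simp
  qed
  have "Re (\<Sum>k\<in>{1..n}. X $$ (j,k) * zr k) = (\<Sum>k\<in>{1..n}. Re (X $$ (j,k) * zr k))" by (rule Re_sum)
  also have "\<dots> = 0" by (rule sum.neutral) (use tk in blast)
  finally have "Re (\<Sum>k\<in>{1..n}. X $$ (j,k) * zr k) = 0" .
  then show ?thesis unfolding E2[OF goodD(2)[OF g] j] using rj r00 by simp
qed

lemma trace_formula:
  assumes gX: "goodX X" and gY: "goodX Y"
  shows "mtrace (X * comm Y pp) = (\<Sum>j\<in>{1..n}. X $$ (j,0) * cnj ((comm Y pp) $$ (j,0)) - cnj (X $$ (j,0)) * (comm Y pp) $$ (j,0))"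
proof -
  let ?b = "comm Y pp"
  have Xc: "X \<in> carrier_mat (n+1) (n+1)" and Yc: "Y \<in> carrier_mat (n+1) (n+1)"
    and Xu: "X \<in> u_alg (n+1)" and Yu: "Y \<in> u_alg (n+1)" using goodD gX gY by blast+
  have bc: "?b \<in> carrier_mat (n+1) (n+1)" unfolding comm_def
    by (rule minus_carrier_mat) (use Yc p_carrier in simp)
  have bz: "\<And>i k. i \<in> {1..n} \<Longrightarrow> k \<in> {1..n} \<Longrightarrow> ?b $$ (i,k) = 0" using goodD(3)[OF gY] by blast
  have b00: "?b $$ (0,0) = 0"
  proof -
    have "mtrace ?b = mtrace (Y * pp) - mtrace (pp * Y)" unfolding comm_def
      by (rule mtr_minus[of _ "n+1"]) (use Yc p_carrier in simp_all)
    also have "\<dots> = 0" using mtr_comm[OF Yc p_carrier] by simp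
    finally have t0: "mtrace ?b = 0" .
    have "mtrace ?b = (\<Sum>i<Suc n. ?b $$ (i,i))" unfolding mtrace_def using bc by simp
    also have "\<dots> = ?b $$ (0,0) + (\<Sum>i\<in>{1..n}. ?b $$ (i,i))" by (rule sum_split0)
    also have "(\<Sum>i\<in>{1..n}. ?b $$ (i,i)) = 0" by (rule sum.neutral) (use bz in blast)
    finally show ?thesis using t0 by simp
  qed
  have bh: "?b $$ (0,i) = cnj (?b $$ (i,0))" if "i \<in> {1..n}" for i
    using comm_herm[OF Yu, of 0 i] that by simp
  have F0: "(\<Sum>k<Suc n. X $$ (0,k) * ?b $$ (k,0)) = (\<Sum>k\<in>{1..n}. - cnj (X $$ (k,0)) * ?b $$ (k,0))"
  proof -
    have "(\<Sum>k<Suc n. X $$ (0,k) * ?b $$ (k,0)) = X $$ (0,0) * ?b $$ (0,0) + (\<Sum>k\<in>{1..n}. X $$ (0,k) * ?b $$ (k,0))"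
      by (rule sum_split0)
    also have "(\<Sum>k\<in>{1..n}. X $$ (0,k) * ?b $$ (k,0)) = (\<Sum>k\<in>{1..n}. - cnj (X $$ (k,0)) * ?b $$ (k,0))"
    proof (rule sum.cong)
      fix k assume k: "k \<in> {1..n}"
      have "X $$ (0,k) = - cnj (X $$ (k,0))" using u_skew[OF Xu, of 0 k] k by simp
      then show "X $$ (0,k) * ?b $$ (k,0) = - cnj (X $$ (k,0)) * ?b $$ (k,0)" by simp
    qed simp
    finally show ?thesis using b00 by simp
  qed
  have Fi: "(\<Sum>k<Suc n. X $$ (i,k) * ?b $$ (k,i)) = X $$ (i,0) * cnj (?b $$ (i,0))" if i: "i \<in> {1..n}" for i
  proof -
    have "(\<Sum>k<Suc n. X $$ (i,k) * ?b $$ (k,i)) = X $$ (i,0) * ?b $$ (0,i) + (\<Sum>k\<in>{1..n}. X $$ (i,k) * ?b $$ (k,i))"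
      by (rule sum_split0)
    also have "(\<Sum>k\<in>{1..n}. X $$ (i,k) * ?b $$ (k,i)) = 0"
      by (rule sum.neutral) (use bz i in simp)
    finally show ?thesis using bh[OF i] by simp
  qed
  have "mtrace (X * ?b) = (\<Sum>i<Suc n. \<Sum>k<Suc n. X $$ (i,k) * ?b $$ (k,i))"
    using mtr_mult[OF Xc bc] by simp
  also have "\<dots> = (\<Sum>k<Suc n. X $$ (0,k) * ?b $$ (k,0)) + (\<Sum>i\<in>{1..n}. \<Sum>k<Suc n. X $$ (i,k) * ?b $$ (k,i))"
    by (rule sum_split0)
  also have "(\<Sum>i\<in>{1..n}. \<Sum>k<Suc n. X $$ (i,k) * ?b $$ (k,i)) = (\<Sum>i\<in>{1..n}. X $$ (i,0) * cnj (?b $$ (i,0)))"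
    by (rule sum.cong[OF refl]) (rule Fi)
  finally show ?thesis unfolding F0 by (simp add: sum_subtractf sum_negf[symmetric] sum.distrib[symmetric])
qed

lemma TJ:
  assumes gX: "goodX X" and gY: "goodX Y" and j: "j \<in> {1..n}"
  shows "X $$ (j,0) * cnj ((comm Y pp) $$ (j,0)) - cnj (X $$ (j,0)) * (comm Y pp) $$ (j,0)
    = (if is_P n lam mu (mu j) then (cnj ((comm Y pp) $$ (j,0)) * (comm X pp) $$ (j,0)
         - cnj ((comm X pp) $$ (j,0)) * (comm Y pp) $$ (j,0)) / complex_of_real (C_coef n lam mu (mu j)) else 0)"
proof -
  consider "is_M n lam mu (mu j)" | "is_W n lam mu (mu j)" | "is_P n lam mu (mu j)" using trich by blast
  then show ?thesis
  proof cases
    case 1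
    then have nP: "\<not> is_P n lam mu (mu j)" using excl by blast
    show ?thesis
    proof (cases "fi (mu j) = j")
      case True
      have r1: "Re (X $$ (j,0)) = 0" by (rule G3[OF gX j 1 True])
      have r2: "Re ((comm Y pp) $$ (j,0)) = 0" by (rule G4[OF gY j 1 True])
      show ?thesis using nP r1 r2 by (simp add: complex_eq_iff)
    next
      case False
      have "X $$ (j,0) = 0" by (rule G2[OF gX j 1 False])
      then show ?thesis using nP by simp
    qed
  next
    case 2
    then have nP: "\<not> is_P n lam mu (mu j)" and nM: "\<not> is_M n lam mu (mu j)" using excl by blast+
    have "C_coef n lam mu (mu j) = 0" by (rule C_W[OF mu_in[OF j] 2])
    then have "(comm Y pp) $$ (j,0) = 0" using G1[OF gY j nM] by simp
    then show ?thesis using nP by simp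
  next
    case 3
    then have nM: "\<not> is_M n lam mu (mu j)" using excl by blast
    define c where "c = C_coef n lam mu (mu j)"
    have a: "(comm X pp) $$ (j,0) = c * X $$ (j,0)" using G1[OF gX j nM] unfolding c_def .
    have b: "(comm Y pp) $$ (j,0) = c * Y $$ (j,0)" using G1[OF gY j nM] unfolding c_def .
    show ?thesis
    proof (cases "c = 0")
      case True then show ?thesis unfolding a b c_def[symmetric] by simp
    next
      case False
      then have c0: "complex_of_real c \<noteq> 0" by simp
      show ?thesis unfolding a b c_def[symmetric] using 3 c0 by (simp add: field_simps)
    qed
  qed
qed

lemma sum_shift: fixes h :: "nat \<Rightarrow> 'a::comm_monoid_add" and f d :: nat shows "(\<Sum>j\<in>{f..<f+d}. h j) = (\<Sum>k<d. h (f + k))"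
  using sum.shift_bounds_nat_ivl[of h 0 f d] by (simp add: atLeast0LessThan add.commute)

lemma group_P:
  "(\<Sum>j\<in>{1..n}. if is_P n lam mu (mu j) then h j else 0)
    = (\<Sum>m\<in>{m\<in>mu_vals n mu. is_P n lam mu m}. \<Sum>k<mult_mu n mu m. h (fi m + k))"
proof -
  let ?J = "{j\<in>{1..n}. is_P n lam mu (mu j)}"
  have "(\<Sum>j\<in>{1..n}. if is_P n lam mu (mu j) then h j else 0) = sum h ?J"
    by (rule sum.inter_filter[symmetric]) simp
  also have "\<dots> = (\<Sum>m\<in>mu ` ?J. sum h {j\<in>?J. mu j = m})"
    by (rule sum.image_gen) simp
  also have "mu ` ?J = {m\<in>mu_vals n mu. is_P n lam mu m}" unfolding mu_vals_def by auto
  also have "(\<Sum>m\<in>{m\<in>mu_vals n mu. is_P n lam mu m}. sum h {j\<in>?J. mu j = m})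
     = (\<Sum>m\<in>{m\<in>mu_vals n mu. is_P n lam mu m}. \<Sum>k<mult_mu n mu m. h (fi m + k))"
  proof (rule sum.cong)
    fix m assume m: "m \<in> {m\<in>mu_vals n mu. is_P n lam mu m}"
    have "{j\<in>?J. mu j = m} = {j\<in>{1..n}. mu j = m}" using m by auto
    also have "\<dots> = {fi m..<fi m + mult_mu n mu m}" using block m by blast
    finally show "sum h {j\<in>?J. mu j = m} = (\<Sum>k<mult_mu n mu m. h (fi m + k))"
      using sum_shift by simp
  qed simp
  finally show ?thesis .
qed

lemma omega_W_eq:
  "omega_W n lam mu (Psi n lam mu a) (Psi n lam mu b) = (1 / \<i>) *
    (\<Sum>m\<in>{m\<in>mu_vals n mu. is_P n lam mu m}. \<Sum>k<mult_mu n mu m.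
       (cnj (b $$ (fi m + k, 0)) * a $$ (fi m + k, 0) - cnj (a $$ (fi m + k, 0)) * b $$ (fi m + k, 0))
       / complex_of_real (C_coef n lam mu (mu (fi m + k))))"
  unfolding omega_W_def
proof (intro arg_cong2[where f="(*)"] refl sum.cong)
  fix m assume m: "m \<in> {m\<in>mu_vals n mu. is_P n lam mu m}"
  have mk: "mu (fi m + k) = m" if "k < mult_mu n mu m" for k
  proof -
    have "fi m + k \<in> {fi m..<fi m + mult_mu n mu m}" using that by simp
    then show ?thesis using block[of m] m by blast
  qed
  have pa: "Psi n lam mu a m = vec (mult_mu n mu m) (\<lambda>k. a $$ (fi m + k, 0))"
    unfolding Psi_def using m by simp
  have pb: "Psi n lam mu b m = vec (mult_mu n mu m) (\<lambda>k. b $$ (fi m + k, 0))"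
    unfolding Psi_def using m by simp
  show "(- cdot (Psi n lam mu a m) (Psi n lam mu b m) + cdot (Psi n lam mu b m) (Psi n lam mu a m)) /
        complex_of_real (C_coef n lam mu m) =
    (\<Sum>k<mult_mu n mu m.
       (cnj (b $$ (fi m + k, 0)) * a $$ (fi m + k, 0) - cnj (a $$ (fi m + k, 0)) * b $$ (fi m + k, 0))
       / complex_of_real (C_coef n lam mu (mu (fi m + k))))"
    unfolding pa pb cdot_def
    by (simp add: mk sum_divide_distrib[symmetric] sum_subtractf)
qed

end

theorem proposition4p7:
  fixes n :: nat and lam mu :: "nat \<Rightarrow> real"
  assumes "n \<ge> 1"
    and "interlacing n lam mu"
  shows "\<forall>a \<in> tangent_K_perp n (p_tilde n lam mu). \<forall>b \<in> tangent_K_perp n (p_tilde n lam mu).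
           omega_KKS (p_tilde n lam mu) a b
             = omega_W n lam mu (Psi n lam mu a) (Psi n lam mu b)"
proof -
  interpret ilc n lam mu by unfold_locales (rule assms(2))
  show ?thesis
  proof (intro ballI)
    fix a b assume a: "a \<in> tangent_K_perp n pp" and b: "b \<in> tangent_K_perp n pp"
    have dp: "dim_row pp = n+1" using p_carrier by simp
    obtain X where X: "X \<in> u_alg (n+1)" "a = comm X pp"
      using a unfolding tangent_K_perp_def tangent_orbit_def dp by blast
    obtain Y where Y: "Y \<in> u_alg (n+1)" "b = comm Y pp"
      using b unfolding tangent_K_perp_def tangent_orbit_def dp by blast
    have gX: "goodX X" unfolding goodX_def using X perp_zero[OF a X(1) X(2)] by blast
    have gY: "goodX Y" unfolding goodX_def using Y perp_zero[OF b Y(1) Y(2)] by blast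
    let ?h = "\<lambda>j. (cnj (b $$ (j,0)) * a $$ (j,0) - cnj (a $$ (j,0)) * b $$ (j,0))
       / complex_of_real (C_coef n lam mu (mu j))"
    have "omega_KKS pp a b = (1 / \<i>) * mtrace (X * comm Y pp)"
      unfolding X(2) Y(2) by (rule omega_eq[OF p_carrier X(1) Y(1)])
    also have "mtrace (X * comm Y pp) = (\<Sum>j\<in>{1..n}. X $$ (j,0) * cnj ((comm Y pp) $$ (j,0)) - cnj (X $$ (j,0)) * (comm Y pp) $$ (j,0))"
      by (rule trace_formula[OF gX gY])
    also have "\<dots> = (\<Sum>j\<in>{1..n}. if is_P n lam mu (mu j) then ?h j else 0)"
      unfolding X(2) Y(2) by (rule sum.cong) (simp_all add: TJ[OF gX gY])
    also have "\<dots> = (\<Sum>m\<in>{m\<in>mu_vals n mu. is_P n lam mu m}. \<Sum>k<mult_mu n mu m. ?h (fi m + k))"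
      by (rule group_P)
    also have "(1 / \<i>) * \<dots> = omega_W n lam mu (Psi n lam mu a) (Psi n lam mu b)"
      by (rule omega_W_eq[symmetric])
    finally show "omega_KKS pp a b = omega_W n lam mu (Psi n lam mu a) (Psi n lam mu b)" .
  qed
qed


end
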